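(* In the setting below, let $(m_j)_{j\in\mathbb{N}}$ be a strictly increasing sequence of natural numbers and $(\rho_j)_{j\in\mathbb{N}}$ a sequence of strictly positive reals. Suppose (1) there exists $K\ge 0$ such that $\mathbb{P}_X(S_{\rho_j})\le K\,\mathbb{P}_X(B_{\rho_j})$ for all $j$, and (2) $m_j\,\mathbb{P}_X(\bar B_{\rho_j})\to\infty$ as $j\to\infty$. Then $$\mathbb{E}\big[\mathbb{I}_{S_{\rho_j}}(X^x_{m_j})|\eta(X^x_{m_j})-\eta(x)|\big]\to 0\quad\text{as } j\to\infty.$$
   Context: Let $(\mathcal{X},d)$ be a metric space with its Borel $\sigma$-algebra, let $(\Omega,\mathcal{F},\mathbb{P})$ be a probability space, and let $X,X_1,X_2,\dots$ be i.i.d. $\mathcal{X}$-valued random variables with common law $\mathbb{P}_X$. For $x\in\mathcal{X}$ and $r>0$ write $B_r=\{x':d(x,x')<r\}$, $\bar B_r=\{x':d(x,x')\le r\}$ and $S_r=\{x':d(x,x')=r\}$. The support of $\mathbb{P}_X$ is the set of $x$ such that $\mathbb{P}_X(\bar B_r(x))>0$ for all $r>0$. Fix $x$ in the support of $\mathbb{P}_X$ and a bounded measurable $\eta:\mathcal{X}\to\mathbb{R}$. For each $m\in\mathbb{N}$, a nearest neighbor of $x$ among $X_1,\dots,X_m$ is a measurable $X^x_m:\Omega\to\mathcal{X}$ with $X^x_m(\omega)\in\arg\min_{x'\in\{X_1(\omega),\dots,X_m(\omega)\}}d(x,x')$ for every $\omega\in\Omega$; fix such a sequence $(X^x_m)_{m\in\mathbb{N}}$.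 *)

theory Defs
  imports "HOL-Probability.Probability"
begin

end

theory Submission
  imports Defs
begin

lemma closed_sphere_ms: "closed (sphere (a::'a::metric_space) r)"
proof -
  have "sphere a r = cball a r - ball a r" by auto
  then show ?thesis by (simp add: closed_Diff)
qed

lemma key_prob:
  fixes M :: "'m measure" and X :: "'m \<Rightarrow> 'a::metric_space" and Xs NN
  assumes prob: "prob_space M"
    and X_meas: "X \<in> M \<rightarrow>\<^sub>M borel"
    and indep: "prob_space.indep_vars M (\<lambda>_. borel) Xs {1..}"
    and ident: "\<And>i. i \<ge> 1 \<Longrightarrow> distr M borel (Xs i) = distr M borel X"
    and NN_meas: "NN \<in> M \<rightarrow>\<^sub>M borel"
    and NN_min: "\<And>\<omega> i. \<omega> \<in> space M \<Longrightarrow> i \<in> {1..m} \<Longrightarrow>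
                   dist x (NN \<omega>) \<le> dist x (Xs i \<omega>)"
    and m: "m \<ge> 1" and r: "r > 0"
  shows "measure M {\<omega>\<in>space M. NN \<omega> \<in> sphere x r} \<le> (1 - measure (distr M borel X) (ball x r))^m"
proof -
  interpret prob_space M by (rule prob)
  let ?A = "\<lambda>i. Xs i -` (- ball x r) \<inter> space M"
  have sub: "{\<omega>\<in>space M. NN \<omega> \<in> sphere x r} \<subseteq> (\<Inter>i\<in>{1..m}. ?A i)"
    using NN_min by fastforce
  have ind2: "indep_sets (\<lambda>i. { Xs i -` A \<inter> space M | A. A \<in> sets (borel::'a measure)}) {1..}"
    using indep unfolding indep_vars_def2 by auto
  have rv: "\<And>i. i \<ge> 1 \<Longrightarrow> Xs i \<in> M \<rightarrow>\<^sub>M borel"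
    using indep unfolding indep_vars_def2 by auto
  have inAs: "?A i \<in> events" if "i \<ge> (1::nat)" for i using measurable_sets[OF rv[OF that], of "- ball x r"] by auto
  have "measure M {\<omega>\<in>space M. NN \<omega> \<in> sphere x r} \<le> prob (\<Inter>i\<in>{1..m}. ?A i)"
    apply (rule finite_measure_mono[OF sub])
    using m inAs by (intro sets.finite_INT) auto
  also have "\<dots> = (\<Prod>i\<in>{1..m}. prob (?A i))"
    apply (rule indep_setsD[OF ind2])
    using m by (auto intro!: exI[of _ "- ball x r"])
  also have "\<dots> = (\<Prod>i\<in>{1..m}. 1 - measure (distr M borel X) (ball x r))"
  proof (rule prod.cong[OF refl])
    fix i assume i: "i \<in> {1..m}"
    have "prob (?A i) = measure (distr M borel (Xs i)) (- ball x r)"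
      using rv[of i] i by (subst measure_distr) auto
    also have "\<dots> = measure (distr M borel X) (- ball x r)" using ident[of i] i by simp
    also have "\<dots> = 1 - measure (distr M borel X) (ball x r)"
    proof -
      interpret P: prob_space "distr M borel X" by (rule prob_space_distr[OF X_meas])
      have "- ball x r = space (distr M borel X) - ball x r" by auto
      then show ?thesis using P.prob_compl[of "ball x r"] by simp
    qed
    finally show "prob (?A i) = 1 - measure (distr M borel X) (ball x r)" .
  qed
  also have "\<dots> = (1 - measure (distr M borel X) (ball x r))^m" by simp
  finally show ?thesis .
qed

theorem mainTheorem7:
  fixes M :: "'m measure"
    and X :: "'m \<Rightarrow> 'a::metric_space"
    and Xs :: "nat \<Rightarrow> 'm \<Rightarrow> 'a"
    and x :: 'a
    and \<eta> :: "'a \<Rightarrow> real"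
    and NN :: "nat \<Rightarrow> 'm \<Rightarrow> 'a"
    and mj :: "nat \<Rightarrow> nat"
    and \<rho> :: "nat \<Rightarrow> real"
  assumes prob: "prob_space M"
    and X_meas: "X \<in> M \<rightarrow>\<^sub>M borel"
    and indep: "prob_space.indep_vars M (\<lambda>_. borel) Xs {1..}"
    and ident: "\<And>i. i \<ge> 1 \<Longrightarrow> distr M borel (Xs i) = distr M borel X"
    and supp: "\<And>r. r > 0 \<Longrightarrow> measure (distr M borel X) (cball x r) > 0"
    and eta_meas: "\<eta> \<in> borel_measurable borel"
    and eta_bdd: "bounded (range \<eta>)"
    and NN_meas: "\<And>m. NN m \<in> M \<rightarrow>\<^sub>M borel"
    and NN_in: "\<And>m \<omega>. m \<ge> 1 \<Longrightarrow> \<omega> \<in> space M \<Longrightarrow> NN m \<omega> \<in> (\<lambda>i. Xs i \<omega>) ` {1..m}"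
    and NN_min: "\<And>m \<omega> i. m \<ge> 1 \<Longrightarrow> \<omega> \<in> space M \<Longrightarrow> i \<in> {1..m} \<Longrightarrow>
                   dist x (NN m \<omega>) \<le> dist x (Xs i \<omega>)"
    and mj_mono: "strict_mono mj"
    and rho_pos: "\<And>j. \<rho> j > 0"
    and cond1: "\<exists>K\<ge>0. \<forall>j. measure (distr M borel X) (sphere x (\<rho> j))
                   \<le> K * measure (distr M borel X) (ball x (\<rho> j))"
    and cond2: "filterlim (\<lambda>j. real (mj j) * measure (distr M borel X) (cball x (\<rho> j))) at_top sequentially"
  shows "(\<lambda>j. integral\<^sup>L M (\<lambda>\<omega>. indicator (sphere x (\<rho> j)) (NN (mj j) \<omega>)
              * \<bar>\<eta> (NN (mj j) \<omega>) - \<eta> x\<bar>)) \<longlonglongrightarrow> 0"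
  proof -
  interpret prob_space M by (rule prob)
  define P where "P = distr M borel X"
  interpret P: prob_space P unfolding P_def by (rule prob_space_distr[OF X_meas])
  obtain K where K: "K \<ge> 0" "\<And>j. measure P (sphere x (\<rho> j)) \<le> K * measure P (ball x (\<rho> j))"
    using cond1 unfolding P_def by auto
  obtain B where B: "\<And>y. \<bar>\<eta> y\<bar> \<le> B" using eta_bdd unfolding bounded_iff by auto
  define p where "p j = measure P (ball x (\<rho> j))" for j
  define c where "c j = measure P (cball x (\<rho> j))" for j
  have cp: "c j \<le> (1 + K) * p j" for j
  proof -
    have "cball x (\<rho> j) = ball x (\<rho> j) \<union> sphere x (\<rho> j)" by auto
    moreover have s: "ball x (\<rho> j) \<in> sets P" "sphere x (\<rho> j) \<in> sets P"
      unfolding P_def using borel_closed[OF closed_sphere_ms] by auto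
    ultimately have "c j \<le> p j + measure P (sphere x (\<rho> j))"
      unfolding c_def p_def using measure_subadditive[OF s] by (simp add: P.emeasure_finite)
    then show ?thesis using K(2)[of j] unfolding p_def by (simp add: algebra_simps)
  qed
  have lim0: "filterlim (\<lambda>j. (1 / (1 + K)) * (real (mj j) * c j)) at_top sequentially"
    apply (rule filterlim_tendsto_pos_mult_at_top[OF tendsto_const])
    using K(1) cond2 unfolding c_def P_def by auto
  have lim1: "filterlim (\<lambda>j. real (mj j) * p j) at_top sequentially"
  proof (rule filterlim_at_top_mono[OF lim0], rule always_eventually, rule allI)
    fix j
    have "real (mj j) * c j \<le> real (mj j) * ((1 + K) * p j)" using cp[of j] by (simp add: mult_left_mono)
    then show "1 / (1 + K) * (real (mj j) * c j) \<le> real (mj j) * p j" using K(1)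
      by (simp add: field_simps)
  qed
  have lim2: "(\<lambda>j. 2 * B * exp (- (real (mj j) * p j))) \<longlonglongrightarrow> 0"
  proof -
    have "filterlim (\<lambda>j. - (real (mj j) * p j)) at_bot sequentially"
      using lim1 by (simp add: filterlim_uminus_at_top)
    then have "(\<lambda>j. exp (- (real (mj j) * p j))) \<longlonglongrightarrow> 0"
      by (rule filterlim_compose[OF exp_at_bot])
    then show ?thesis using tendsto_mult_right_zero by blast
  qed
  define f where "f j = integral\<^sup>L M (\<lambda>\<omega>. indicator (sphere x (\<rho> j)) (NN (mj j) \<omega>)
              * \<bar>\<eta> (NN (mj j) \<omega>) - \<eta> x\<bar>)" for j
  have g_meas: "(\<lambda>y. indicator (sphere x r) y * \<bar>\<eta> y - \<eta> x\<bar>) \<in> borel_measurable borel" for r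
    by (intro borel_measurable_times borel_measurable_indicator borel_closed closed_sphere_ms
        borel_measurable_abs borel_measurable_diff eta_meas borel_measurable_const)
  have f_nonneg: "0 \<le> f j" for j unfolding f_def by (intro integral_nonneg_AE) auto
  have f_le: "f j \<le> 2 * B * exp (- (real (mj j) * p j))" if j: "j \<ge> 1" for j
  proof -
    let ?m = "mj j" and ?S = "sphere x (\<rho> j)"
    have m1: "?m \<ge> 1" using strict_mono_imp_increasing[OF mj_mono, of j] j by simp
    let ?E = "{\<omega>\<in>space M. NN ?m \<omega> \<in> ?S}"
    have Bnn: "0 \<le> B" using B[of x] by simp
    have Ev: "?E \<in> events"
    proof -
      have "?E = NN ?m -` ?S \<inter> space M" by auto
      then show ?thesis using measurable_sets[OF NN_meas[of ?m], of ?S] using borel_closed[OF closed_sphere_ms] by auto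
    qed
    have meas1: "(\<lambda>\<omega>. indicator ?S (NN ?m \<omega>) * \<bar>\<eta> (NN ?m \<omega>) - \<eta> x\<bar>) \<in> borel_measurable M"
      using measurable_compose[OF NN_meas[of ?m] g_meas[of "\<rho> j"]] by simp
    have int1: "integrable M (\<lambda>\<omega>. indicator ?S (NN ?m \<omega>) * \<bar>\<eta> (NN ?m \<omega>) - \<eta> x\<bar>)"
    proof (rule integrable_const_bound[where B="2*B"])
      show "AE \<omega> in M. norm (indicator ?S (NN ?m \<omega>) * \<bar>\<eta> (NN ?m \<omega>) - \<eta> x\<bar>) \<le> 2 * B"
      proof (rule AE_I2)
        fix \<omega>
        have "\<bar>\<eta> (NN ?m \<omega>) - \<eta> x\<bar> \<le> 2 * B" using B[of "NN ?m \<omega>"] B[of x] by linarith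
        then show "norm (indicator ?S (NN ?m \<omega>) * \<bar>\<eta> (NN ?m \<omega>) - \<eta> x\<bar>) \<le> 2 * B"
          using Bnn by (auto simp: indicator_def)
      qed
    qed (rule meas1)
    have "f j \<le> integral\<^sup>L M (\<lambda>\<omega>. 2 * B * indicator ?E \<omega>)"
      unfolding f_def
    proof (rule integral_mono[OF int1])
      show "integrable M (\<lambda>\<omega>. 2 * B * indicator ?E \<omega>)" by (intro integrable_mult_right integrable_real_indicator Ev) (simp add: less_top[symmetric] emeasure_finite)
      fix \<omega> assume w: "\<omega> \<in> space M"
      have "\<bar>\<eta> (NN ?m \<omega>) - \<eta> x\<bar> \<le> 2 * B" using B[of "NN ?m \<omega>"] B[of x] by linarith
      then show "indicator ?S (NN ?m \<omega>) * \<bar>\<eta> (NN ?m \<omega>) - \<eta> x\<bar> \<le> 2 * B * indicator ?E \<omega>"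
        using w by (auto simp: indicator_def)
    qed
    also have "\<dots> = 2 * B * prob ?E" using Ev by simp
    also have "\<dots> \<le> 2 * B * (1 - p j) ^ ?m"
      apply (rule mult_left_mono[OF _ ])
      using key_prob[OF prob X_meas indep ident NN_meas[of ?m], where x=x and m="?m" and r="\<rho> j"] NN_min m1 rho_pos[of j] Bnn
      unfolding p_def P_def by auto
    also have "\<dots> \<le> 2 * B * exp (- p j) ^ ?m"
    proof (rule mult_left_mono[OF power_mono])
      show "1 - p j \<le> exp (- p j)" using exp_ge_add_one_self[of "- p j"] by simp
      show "0 \<le> 1 - p j" unfolding p_def using P.prob_le_1 by simp
    qed (use Bnn in simp)
    also have "\<dots> = 2 * B * exp (- (real ?m * p j))"
      by (metis exp_of_nat_mult mult_minus_right)
    finally show ?thesis .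
  qed
  show ?thesis unfolding f_def[symmetric]
  proof (rule tendsto_sandwich[OF _ _ tendsto_const lim2])
    show "\<forall>\<^sub>F n in sequentially. 0 \<le> f n" using f_nonneg by simp
    show "\<forall>\<^sub>F n in sequentially. f n \<le> 2 * B * exp (- (real (mj n) * p n))"
      using f_le by (auto simp: eventually_sequentially)
  qed
qed

end
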